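(* Let $a_1,a_2,a_3$ be the parameters of a pure three-mode Gaussian state in the standard form described below. Suppose that for every permutation $(i,j,k)$ of $(1,2,3)$, $$|a_i-a_j|+1<a_k<\sqrt{a_i^2+a_j^2-1}.$$ Then: (i) $a_k>\alpha_k$ for every $k=1,2,3$. (ii) For every choice of focus mode $i$, the residual tripartite Rényi-2 entanglement $$\mathcal E_2(\rho_{A_i:A_j:A_k})=\mathcal E_2(\rho_{A_i:A_jA_k})-\mathcal E_2(\rho_{A_i:A_j})-\mathcal E_2(\rho_{A_i:A_k})$$ equals $\tfrac12\ln\!\big(64a_1^2a_2^2a_3^2/\beta^2\big)$. In particular it does not depend on the choice of focus mode.
   Context: Any pure three-mode Gaussian state is, up to local unitaries, described by a covariance matrix $\boldsymbol\sigma_{A_1A_2A_3}$ in the following standard form. Its diagonal $2\times2$ blocks are $a_i\mathbf I$ for $i=1,2,3$. Its off-diagonal block between modes $A_j$ and $A_k$ is $\mathrm{diag}(c_i^+,c_i^-)$, where $\{i,j,k\}=\{1,2,3\}$. The coefficients are given by $$4\sqrt{a_ja_k}\,c_i^\pm=\sqrt{[(a_i-1)^2-(a_j-a_k)^2][(a_i+1)^2-(a_j-a_k)^2]}\pm\sqrt{[(a_i-1)^2-(a_j+a_k)^2][(a_i+1)^2-(a_j+a_k)^2]},$$ with $|a_j-a_k|+1\le a_i\le a_j+a_k-1$ for all permutations. The covariance matrix convention is $\sigma_{ij}=\langle \hat R_i\hat R_j+\hat R_j\hat R_i\rangle-2\langle\hat R_i\rangle\langle\hat R_j\rangle$. The Gaussian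 Rényi-2 entanglement is $\mathcal E_2(\rho_{X:Y})=\inf\tfrac12\ln\det\boldsymbol\gamma_X$. The infimum is over bona fide pure covariance matrices $\boldsymbol\gamma_{XY}$ (real symmetric, $\boldsymbol\gamma_{XY}+i\boldsymbol\Omega\ge0$, $\det\boldsymbol\gamma_{XY}=1$) with $\boldsymbol\gamma_{XY}\le\boldsymbol\sigma_{XY}$. For the pure state above, $\mathcal E_2(\rho_{A_i:A_jA_k})=\tfrac12\ln\det(a_i\mathbf I)=\ln a_i$. Known fact used as a standing input: the two-mode reduced entanglement is $\mathcal E_2(\rho_{A_i:A_j})=\tfrac12\ln g_k$, where - $g_k=1$ if $a_k\ge\sqrt{a_i^2+a_j^2-1}$; - $g_k=\beta/(8a_k^2)$ if $\alpha_k<a_k<\sqrt{a_i^2+a_j^2-1}$; - $g_k=\big((a_i^2-a_j^2)/(a_k^2-1)\big)^2$ if $a_k\le\alpha_k$. Here $$\alpha_k=\sqrt{\frac{2(a_i^2+a_j^2)+(a_i^2-a_j^2)^2+|a_i^2-a_j^2|\sqrt{(a_i^2-a_j^2)^2+8(a_i^2+a_j^2)}}{2(a_i^2+a_j^2)}},$$ $$\beta=2a_1^2+2a_2^2+2a_3^2+2a_1^2a_2^2+2a_1^2a_3^2+2a_2^2a_3^2-a_1^4-a_2^4-a_3^4-\sqrt\delta-1,$$ $$\delta=\prod_{\mu,\nu\in\{0,1\}}\big[(a_1+(-1)^\mu a_2+(-1)^\nu a_3)^2-1\big].$$ *)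

theory Defs
  imports Complex_Main
begin

definition is_perm3 :: "nat \<Rightarrow> nat \<Rightarrow> nat \<Rightarrow> bool" where
  "is_perm3 i j k \<longleftrightarrow> i \<in> {1,2,3} \<and> j \<in> {1,2,3} \<and> k \<in> {1,2,3} \<and> i \<noteq> j \<and> j \<noteq> k \<and> i \<noteq> k"

definition pure3_params :: "(nat \<Rightarrow> real) \<Rightarrow> bool" where
  "pure3_params a \<longleftrightarrow> (\<forall>i j k. is_perm3 i j k \<longrightarrow>
      \<bar>a j - a k\<bar> + 1 \<le> a i \<and> a i \<le> a j + a k - 1)"

text \<open>alpha_k, where i,j are the other two modes.\<close>
definition alpha3 :: "(nat \<Rightarrow> real) \<Rightarrow> nat \<Rightarrow> nat \<Rightarrow> real" where
  "alpha3 a i j = sqrt ((2 * ((a i)\<^sup>2 + (a j)\<^sup>2) + ((a i)\<^sup>2 - (a j)\<^sup>2)\<^sup>2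
       + \<bar>(a i)\<^sup>2 - (a j)\<^sup>2\<bar> * sqrt (((a i)\<^sup>2 - (a j)\<^sup>2)\<^sup>2 + 8 * ((a i)\<^sup>2 + (a j)\<^sup>2)))
       / (2 * ((a i)\<^sup>2 + (a j)\<^sup>2)))"

definition delta3 :: "(nat \<Rightarrow> real) \<Rightarrow> real" where
  "delta3 a = ((a 1 + a 2 + a 3)\<^sup>2 - 1) * ((a 1 + a 2 - a 3)\<^sup>2 - 1)
             * ((a 1 - a 2 + a 3)\<^sup>2 - 1) * ((a 1 - a 2 - a 3)\<^sup>2 - 1)"

definition beta3 :: "(nat \<Rightarrow> real) \<Rightarrow> real" where
  "beta3 a = 2 * (a 1)\<^sup>2 + 2 * (a 2)\<^sup>2 + 2 * (a 3)\<^sup>2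
     + 2 * (a 1)\<^sup>2 * (a 2)\<^sup>2 + 2 * (a 1)\<^sup>2 * (a 3)\<^sup>2 + 2 * (a 2)\<^sup>2 * (a 3)\<^sup>2
     - (a 1)^4 - (a 2)^4 - (a 3)^4 - sqrt (delta3 a) - 1"

text \<open>g_k for the pair (i,j), k the remaining mode.\<close>
definition g3 :: "(nat \<Rightarrow> real) \<Rightarrow> nat \<Rightarrow> nat \<Rightarrow> nat \<Rightarrow> real" where
  "g3 a i j k =
     (if a k \<ge> sqrt ((a i)\<^sup>2 + (a j)\<^sup>2 - 1) then 1
      else if alpha3 a i j < a k then beta3 a / (8 * (a k)\<^sup>2)
      else (((a i)\<^sup>2 - (a j)\<^sup>2) / ((a k)\<^sup>2 - 1))\<^sup>2)"

text \<open>Gaussian Renyi-2 entanglement of the pure state, via the standing inputs: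
  E2(A_i : A_j A_k) = ln a_i and E2(A_i : A_j) = (1/2) ln g_k.\<close>
definition E2_bip :: "(nat \<Rightarrow> real) \<Rightarrow> nat \<Rightarrow> real" where
  "E2_bip a i = ln (a i)"

definition E2_two :: "(nat \<Rightarrow> real) \<Rightarrow> nat \<Rightarrow> nat \<Rightarrow> nat \<Rightarrow> real" where
  "E2_two a i j k = ln (g3 a i j k) / 2"

definition E2_res :: "(nat \<Rightarrow> real) \<Rightarrow> nat \<Rightarrow> nat \<Rightarrow> nat \<Rightarrow> real" where
  "E2_res a i j k = E2_bip a i - E2_two a i j k - E2_two a i k j"

end

theory Submission
  imports Defs
begin

lemma alpha_aux:
  fixes a :: "nat \<Rightarrow> real" and i j k :: nat
  assumes p0: "0 < a i" and q0: "0 < a j" and r0: "0 < a k"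
    and h1: "\<bar>a i - a j\<bar> + 1 < a k"
    and h2: "(a i)^2 < (a j)^2 + (a k)^2 - 1"
    and h3: "(a j)^2 < (a i)^2 + (a k)^2 - 1"
    and h4: "a k + 1 < a i + a j"
  shows "alpha3 a i j < a k"
proof -
  define p q r where "p = a i" and "q = a j" and "r = a k"
  define X Y Z where "X = p^2" and "Y = q^2" and "Z = r^2"
  define s d where "s = X + Y" and "d = X - Y"
  define R where "R = sqrt (d^2 + 8*s)"
  define W where "W = (p+q)^2"
  have r1: "r > 1" using h1 r_def by linarith
  have Z1: "Z > 1" unfolding Z_def using r1
    by (metis less_1_mult numeral_One one_less_power pos2)
  have X0: "X > 0" unfolding X_def p_def using p0 by simp
  have Y0: "Y > 0" unfolding Y_def q_def using q0 by simp
  have s0: "s > 0" using X0 Y0 s_def by simp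
  have dlt: "\<bar>d\<bar> < Z - 1" using h2 h3 unfolding d_def X_def Y_def Z_def p_def q_def r_def
    by (simp add: abs_less_iff)
  have D: "d^2 < (Z-1)^2"
  proof -
    have "\<bar>d\<bar>^2 < (Z-1)^2" by (rule power_strict_mono) (use dlt in auto)
    then show ?thesis by simp
  qed
  have Wge: "W \<ge> Z + 2*r + 1"
  proof -
    have "(r+1)^2 \<le> (p+q)^2" by (rule power_mono) (use h4 r0 p_def q_def r_def in auto)
    then show ?thesis unfolding W_def Z_def by (simp add: power2_eq_square algebra_simps)
  qed
  have W0: "W > 0" using Wge Z1 r1 by linarith
  have key: "2*W*s = d^2 + W^2"
    unfolding W_def s_def d_def X_def Y_def by (simp add: power2_eq_square algebra_simps)
  define F where "F = s*(Z-1)^2 - d^2*(Z+1)"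
  define B where "B = (Z-1)^2 - 2*W*(Z+1)"
  have eqF: "2*W*F = W^2*(Z-1)^2 + d^2*B"
  proof -
    have "2*W*F = (2*W*s)*(Z-1)^2 - 2*W*d^2*(Z+1)" unfolding F_def by (simp add: algebra_simps)
    also have "\<dots> = W^2*(Z-1)^2 + d^2*B" unfolding key B_def by (simp add: algebra_simps)
    finally show ?thesis .
  qed
  have pos2WF: "2*W*F > 0"
  proof (cases "B \<ge> 0")
    case True
    have "W^2*(Z-1)^2 > 0" using W0 Z1 by simp
    moreover have "d^2*B \<ge> 0" using True by simp
    ultimately show ?thesis using eqF by linarith
  next
    case False
    have "d^2*B > (Z-1)^2*B" using D False by (intro mult_strict_right_mono_neg) auto
    moreover have "(W - Z - 1)^2 \<ge> (2*r)^2" by (rule power_mono) (use Wge r0 r_def in auto)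
    hence "(W - Z - 1)^2 \<ge> 4*Z" unfolding Z_def by (simp add: power2_eq_square)
    hence "(Z-1)^2*((W-Z-1)^2 - 4*Z) \<ge> 0" by simp
    moreover have "(Z-1)^2*((W-Z-1)^2 - 4*Z) = W^2*(Z-1)^2 + (Z-1)^2*B"
      unfolding B_def by (simp add: power2_eq_square algebra_simps)
    ultimately show ?thesis using eqF by linarith
  qed
  have F0: "F > 0" using pos2WF W0 by (simp add: zero_less_mult_iff)
  define L where "L = 2*s*(Z-1) - d^2"
  have dles: "\<bar>d\<bar> < 2*s" unfolding d_def s_def using X0 Y0 by (simp add: abs_less_iff)
  have L0: "L > 0"
  proof -
    have "d^2 = \<bar>d\<bar>*\<bar>d\<bar>" by (simp add: power2_eq_square)
    also have "\<dots> \<le> \<bar>d\<bar>*(Z-1)" using dlt by (intro mult_left_mono) auto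
    also have "\<dots> < 2*s*(Z-1)" using dles Z1 by (intro mult_strict_right_mono) auto
    finally show ?thesis unfolding L_def by simp
  qed
  have Leq: "L^2 - d^2*(d^2+8*s) = 4*s*F"
    unfolding L_def F_def by (simp add: power2_eq_square algebra_simps)
  have nn: "0 \<le> d^2 + 8*s" using s0 by (intro add_nonneg_nonneg) auto
  hence R2: "R^2 = d^2 + 8*s" unfolding R_def by simp
  have R0: "R \<ge> 0" unfolding R_def using nn by simp
  have "(\<bar>d\<bar>*R)^2 < L^2"
  proof -
    have "(\<bar>d\<bar>*R)^2 = d^2*(d^2+8*s)" by (simp add: power_mult_distrib R2)
    moreover have "4*s*F > 0" using s0 F0 by simp
    ultimately show ?thesis using Leq by linarith
  qed
  hence dR: "\<bar>d\<bar>*R < L" using L0 power_less_imp_less_base less_imp_le by metis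
  define N where "N = 2*s + d^2 + \<bar>d\<bar>*R"
  have "N < 2*s*Z" using dR unfolding N_def L_def by (simp add: algebra_simps)
  hence "N / (2*s) < Z" using s0 by (simp add: divide_less_eq mult.commute)
  hence "sqrt (N / (2*s)) < sqrt Z" by simp
  also have "sqrt Z = r" unfolding Z_def using r0 r_def by simp
  finally have "sqrt (N / (2*s)) < r" .
  moreover have "alpha3 a i j = sqrt (N / (2*s))"
    unfolding alpha3_def N_def s_def d_def R_def X_def Y_def p_def q_def by simp
  ultimately show ?thesis using r_def by simp
qed

lemma pair_id: "((p+c)^2 - 1)*((p-c)^2 - 1) = (p^2-c^2)^2 - 2*p^2 - 2*c^2 + (1::real)"
  by algebra
lemma xyz_id: "((y+z)^2 - 2*(y+z)*(x+1) + (x-1)^2 + 4*(y*z))^2 - 16*(y*z)*(y+z-x-1)^2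
  = (2*x+2*y+2*z+2*x*y+2*x*z+2*y*z - x^2-y^2-z^2-1)^2 - 64*x*y*z" for x y z :: real
  by algebra
lemma delta_id:
  "delta3 a = (2*(a 1)^2 + 2*(a 2)^2 + 2*(a 3)^2
     + 2*(a 1)^2*(a 2)^2 + 2*(a 1)^2*(a 3)^2 + 2*(a 2)^2*(a 3)^2
     - (a 1)^4 - (a 2)^4 - (a 3)^4 - 1)^2 - 64*(a 1)^2*(a 2)^2*(a 3)^2"
proof -
  define p u v where "p = a 1" and "u = a 2" and "v = a 3"
  define x y z t where "x = p^2" and "y = u^2" and "z = v^2" and "t = u*v"
  have W: "(u+v)^2 = y+z+2*t" unfolding y_def z_def t_def by algebra
  have M: "(u-v)^2 = y+z-2*t" unfolding y_def z_def t_def by algebra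
  have tt: "t^2 = y*z" unfolding y_def z_def t_def by algebra
  have "delta3 a = (((p+(u+v))^2 - 1)*((p-(u+v))^2 - 1)) * (((p+(u-v))^2 - 1)*((p-(u-v))^2 - 1))"
    unfolding delta3_def p_def u_def v_def by (simp add: algebra_simps)
  also have "\<dots> = ((x-(y+z+2*t))^2 - 2*x - 2*(y+z+2*t) + 1) * ((x-(y+z-2*t))^2 - 2*x - 2*(y+z-2*t) + 1)"
    unfolding pair_id W M x_def ..
  also have "\<dots> = ((y+z)^2 - 2*(y+z)*(x+1) + (x-1)^2 + 4*t^2)^2 - 16*t^2*(y+z-x-1)^2"
    by algebra
  also have "\<dots> = (2*x+2*y+2*z+2*x*y+2*x*z+2*y*z - x^2-y^2-z^2-1)^2 - 64*x*y*z"
    unfolding tt by (rule xyz_id)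
  also have "\<dots> = (2*(a 1)^2 + 2*(a 2)^2 + 2*(a 3)^2
     + 2*(a 1)^2*(a 2)^2 + 2*(a 1)^2*(a 3)^2 + 2*(a 2)^2*(a 3)^2
     - (a 1)^4 - (a 2)^4 - (a 3)^4 - 1)^2 - 64*(a 1)^2*(a 2)^2*(a 3)^2"
    unfolding x_def y_def z_def p_def u_def v_def by (simp add: power_mult_distrib flip: power_mult)
  finally show ?thesis .
qed

lemma beta_pos:
  fixes a :: "nat \<Rightarrow> real"
  assumes "a 1 > 1" "a 2 > 1" "a 3 > 1"
    "a 1 < a 2 + a 3" "a 2 < a 1 + a 3" "a 3 < a 1 + a 2"
  shows "beta3 a > 0"
proof -
  define T where "T = 2*(a 1)^2 + 2*(a 2)^2 + 2*(a 3)^2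
     + 2*(a 1)^2*(a 2)^2 + 2*(a 1)^2*(a 3)^2 + 2*(a 2)^2*(a 3)^2
     - (a 1)^4 - (a 2)^4 - (a 3)^4 - 1"
  have Teq: "T = 2*(a 1)^2 + 2*(a 2)^2 + 2*(a 3)^2 - 1
     + (a 1 + a 2 + a 3)*(a 2 + a 3 - a 1)*(a 1 + a 3 - a 2)*(a 1 + a 2 - a 3)"
    unfolding T_def by algebra
  have P: "(a 1 + a 2 + a 3)*(a 2 + a 3 - a 1)*(a 1 + a 3 - a 2)*(a 1 + a 2 - a 3) > 0"
    using assms by (intro mult_pos_pos) auto
  have "(a 1)^2 > 1" using assms(1) by (simp add: one_less_power)
  moreover have "(a 2)^2 > 0" "(a 3)^2 > 0" using assms by auto
  ultimately have T0: "T > 0" using Teq P by linarith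
  have d: "delta3 a < T^2"
  proof -
    have "64*(a 1)^2*(a 2)^2*(a 3)^2 > 0" using assms by simp
    thus ?thesis using delta_id[of a] unfolding T_def by linarith
  qed
  have "sqrt (delta3 a) < sqrt (T^2)" using d by (rule real_sqrt_less_mono)
  also have "sqrt (T^2) = T" using T0 by simp
  finally have "sqrt (delta3 a) < T" .
  thus ?thesis unfolding beta3_def T_def by simp
qed

lemma sq_of:
  assumes "0 < (x::real)" "x < sqrt y" shows "x^2 < y"
proof -
  have "0 < sqrt y" using assms by linarith
  hence y0: "0 \<le> y" by simp
  have "x^2 < (sqrt y)^2" using assms by (intro power_strict_mono) auto
  thus ?thesis using y0 by simp
qed

lemma perm_cases:
  assumes "is_perm3 i j k"
  shows "(i,j,k) \<in> {(1,2,3),(1,3,2),(2,1,3),(2,3,1),(3,1,2),(3,2,1)}"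
  using assms unfolding is_perm3_def by auto

theorem mainTheorem8:
  fixes a :: "nat \<Rightarrow> real"
  assumes "pure3_params a"
    and "\<forall>i j k. is_perm3 i j k \<longrightarrow>
           \<bar>a i - a j\<bar> + 1 < a k \<and> a k < sqrt ((a i)\<^sup>2 + (a j)\<^sup>2 - 1)"
  shows "(\<forall>i j k. is_perm3 i j k \<longrightarrow> a k > alpha3 a i j)
       \<and> (\<forall>i j k. is_perm3 i j k \<longrightarrow>
            E2_res a i j k = ln (64 * (a 1)\<^sup>2 * (a 2)\<^sup>2 * (a 3)\<^sup>2 / (beta3 a)\<^sup>2) / 2)"
proof -
  have H: "\<bar>a i - a j\<bar> + 1 < a k \<and> a k < sqrt ((a i)^2 + (a j)^2 - 1)"
    if "is_perm3 i j k" for i j k using assms(2) that by blast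
  have P: "is_perm3 j k i" "is_perm3 i k j" "is_perm3 k j i" if "is_perm3 i j k" for i j k
    using that unfolding is_perm3_def by auto
  have pos: "a k > 1" if "is_perm3 i j k" for i j k using H[OF that] by linarith
  have pos1: "a 1 > 1" using pos[of 2 3 1] by (simp add: is_perm3_def)
  have pos2: "a 2 > 1" using pos[of 1 3 2] by (simp add: is_perm3_def)
  have pos3: "a 3 > 1" using pos[of 1 2 3] by (simp add: is_perm3_def)
  have posk: "a k > 0" if "is_perm3 i j k" for i j k using pos[OF that] by linarith
  have tri: "a k + 1 < a i + a j" if "is_perm3 i j k" for i j k
    using H[OF P(3)[OF that]] by linarith
  have part1: "alpha3 a i j < a k" if "is_perm3 i j k" for i j k
  proof (rule alpha_aux)
    show "0 < a i" using posk[OF P(1)[OF that]] .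
    show "0 < a j" using posk[OF P(2)[OF that]] .
    show "0 < a k" using posk[OF that] .
    show "\<bar>a i - a j\<bar> + 1 < a k" using H[OF that] by blast
    show "(a i)^2 < (a j)^2 + (a k)^2 - 1"
      using H[OF P(1)[OF that]] posk[OF P(1)[OF that]] sq_of by blast
    show "(a j)^2 < (a i)^2 + (a k)^2 - 1"
      using H[OF P(2)[OF that]] posk[OF P(2)[OF that]] sq_of by blast
    show "a k + 1 < a i + a j" using tri[OF that] .
  qed
  have b0: "beta3 a > 0"
  proof (rule beta_pos[OF pos1 pos2 pos3])
    show "a 1 < a 2 + a 3" using tri[of 2 3 1] by (simp add: is_perm3_def)
    show "a 2 < a 1 + a 3" using tri[of 1 3 2] by (simp add: is_perm3_def)
    show "a 3 < a 1 + a 2" using tri[of 1 2 3] by (simp add: is_perm3_def)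
  qed
  have g: "g3 a i j k = beta3 a / (8 * (a k)^2)" if "is_perm3 i j k" for i j k
    using H[OF that] part1[OF that] unfolding g3_def by auto
  have part2: "E2_res a i j k = ln (64 * (a 1)^2 * (a 2)^2 * (a 3)^2 / (beta3 a)^2) / 2"
    if pk: "is_perm3 i j k" for i j k
  proof -
    have ai: "a i > 0" using posk[OF P(1)[OF pk]] .
    have aj: "a j > 0" using posk[OF P(2)[OF pk]] .
    have ak: "a k > 0" using posk[OF pk] .
    have a1: "a 1 > 0" "a 2 > 0" "a 3 > 0" using pos1 pos2 pos3 by auto
    have sum: "ln (a i) + ln (a j) + ln (a k) = ln (a 1) + ln (a 2) + ln (a 3)"
      using perm_cases[OF pk] by auto
    have "E2_res a i j k = ln (a i) - ln (beta3 a / (8 * (a k)^2)) / 2 - ln (beta3 a / (8 * (a j)^2)) / 2"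
      unfolding E2_res_def E2_bip_def E2_two_def g[OF pk] g[OF P(2)[OF pk]] ..
    also have "\<dots> = (2*ln (a i) + 2*ln 8 + 2*ln (a k) + 2*ln (a j) - 2*ln (beta3 a)) / 2"
      using ai aj ak b0 by (simp add: ln_div ln_mult ln_realpow field_simps)
    also have "\<dots> = (2*ln 8 + 2*(ln (a i) + ln (a j) + ln (a k)) - 2*ln (beta3 a)) / 2"
      by (simp add: algebra_simps)
    also have "\<dots> = (2*ln 8 + 2*(ln (a 1) + ln (a 2) + ln (a 3)) - 2*ln (beta3 a)) / 2"
      unfolding sum ..
    also have "\<dots> = ln (64 * (a 1)^2 * (a 2)^2 * (a 3)^2 / (beta3 a)^2) / 2"
    proof -
      have "ln (64::real) = 2 * ln 8" using ln_mult[of "8::real" 8] by simp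
      thus ?thesis using a1 b0 by (simp add: ln_div ln_mult ln_realpow algebra_simps)
    qed
    finally show ?thesis .
  qed
  show ?thesis
  proof (intro conjI allI impI)
    fix i j k assume "is_perm3 i j k"
    then show "alpha3 a i j < a k" by (rule part1)
  next
    fix i j k assume "is_perm3 i j k"
    then show "E2_res a i j k = ln (64 * (a 1)\<^sup>2 * (a 2)\<^sup>2 * (a 3)\<^sup>2 / (beta3 a)\<^sup>2) / 2"
      by (rule part2)
  qed
qed

end
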